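(* Let $d\ge 1$, $\kappa \in \{0,\dots,d-1\}$, $\varepsilon_0 \ge 0$, $p_0 = \frac{e^{\varepsilon_0}}{1+e^{\varepsilon_0}}$, $\varepsilon\ge 0$, and $\tau = \lceil\frac{d+\kappa+1}{2}\rceil/d$. If \[ \log\Big(\sum_{\ell=0}^{d\tau-1}\binom d\ell\Big) - \log\Big(\sum_{\ell=d\tau}^{d}\binom d\ell\Big) \le \varepsilon, \] then the mechanism $u\mapsto\mathrm{PrivUnitInfty}(u,\kappa,p_0)$ on $[-1,1]^d$ is $(\varepsilon+\varepsilon_0)$-locally differentially private.
   Context: $\mathrm{PrivUnitInfty}(u,\kappa,p)$ for $u\in[-1,1]^d$, $\kappa\in\{0,\dots,d-1\}$, $p\in[1/2,1]$: independently for each $j$, set $\widehat U_j=1$ with probability $\frac{1+u_j}2$ and $\widehat U_j=-1$ otherwise. Then with probability $p$ draw $V$ uniformly from $\{v\in\{-1,1\}^d:\langle v,\widehat U\rangle>\kappa\}$, and otherwise uniformly from $\{v\in\{-1,1\}^d:\langle v,\widehat U\rangle\le\kappa\}$. With $\tau=\lceil\frac{d+\kappa+1}2\rceil/d$ set $m = p\frac{\binom{d-1}{d\tau-1}}{\sum_{\ell=d\tau}^d\binom d\ell} - (1-p)\frac{\binom{d-1}{d\tau-1}}{\sum_{\ell=0}^{d\tau-1}\binom d\ell}$ and output $Z=V/m$. A mechanism $M$ is $\varepsilon$-locally differentially private if $\mathbb P(M(u)\in S)\le e^{\varepsilon}\mathbb P(M(u')\in S)$ for all inputs $u,u'$ and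 all sets $S$. *)

theory Defs
  imports "HOL-Probability.Probability"
begin

text \<open>Vectors in R^d / {-1,1}^d are represented as functions nat => real,
  with coordinates 0..d-1 (value 0 outside).\<close>

definition sign_cube :: "nat \<Rightarrow> (nat \<Rightarrow> real) set" where
  "sign_cube d = {v. (\<forall>j<d. v j = 1 \<or> v j = -1) \<and> (\<forall>j. d \<le> j \<longrightarrow> v j = 0)}"

definition ip :: "nat \<Rightarrow> (nat \<Rightarrow> real) \<Rightarrow> (nat \<Rightarrow> real) \<Rightarrow> real" where
  "ip d v w = (\<Sum>j<d. v j * w j)"

definition dtau :: "nat \<Rightarrow> nat \<Rightarrow> nat" where
  "dtau d \<kappa> = nat \<lceil>(real d + real \<kappa> + 1) / 2\<rceil>"

definition tau :: "nat \<Rightarrow> nat \<Rightarrow> real" where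
  "tau d \<kappa> = real (dtau d \<kappa>) / real d"

definition priv_m :: "nat \<Rightarrow> nat \<Rightarrow> real \<Rightarrow> real" where
  "priv_m d \<kappa> p =
     p * real ((d - 1) choose (dtau d \<kappa> - 1)) / real (\<Sum>l = dtau d \<kappa>..d. d choose l)
     - (1 - p) * real ((d - 1) choose (dtau d \<kappa> - 1)) / real (\<Sum>l = 0..dtau d \<kappa> - 1. d choose l)"

definition round_pmf :: "nat \<Rightarrow> (nat \<Rightarrow> real) \<Rightarrow> (nat \<Rightarrow> real) pmf" where
  "round_pmf d u = Pi_pmf {..<d} 0
     (\<lambda>j. map_pmf (\<lambda>b. if b then 1 else -1) (bernoulli_pmf ((1 + u j) / 2)))"

definition PrivUnitInfty :: "nat \<Rightarrow> (nat \<Rightarrow> real) \<Rightarrow> nat \<Rightarrow> real \<Rightarrow> (nat \<Rightarrow> real) pmf" where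
  "PrivUnitInfty d u \<kappa> p =
     map_pmf (\<lambda>v j. v j / priv_m d \<kappa> p)
       (do {
          U \<leftarrow> round_pmf d u;
          b \<leftarrow> bernoulli_pmf p;
          if b then pmf_of_set {v \<in> sign_cube d. ip d v U > real \<kappa>}
          else pmf_of_set {v \<in> sign_cube d. ip d v U \<le> real \<kappa>}
        })"

definition local_dp :: "'a set \<Rightarrow> ('a \<Rightarrow> 'b pmf) \<Rightarrow> real \<Rightarrow> bool" where
  "local_dp X M \<epsilon> \<longleftrightarrow>
     (\<forall>u\<in>X. \<forall>u'\<in>X. \<forall>S. measure_pmf.prob (M u) S \<le> exp \<epsilon> * measure_pmf.prob (M u') S)"

definition input_cube :: "nat \<Rightarrow> (nat \<Rightarrow> real) set" where
  "input_cube d = {u. (\<forall>j<d. -1 \<le> u j \<and> u j \<le> 1) \<and> (\<forall>j. d \<le> j \<longrightarrow> u j = 0)}"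

end

theory Submission imports Defs begin

lemma meas_bind: "measure_pmf.prob (bind_pmf M f) X = (\<integral>x. measure_pmf.prob (f x) X \<partial>M)"
  unfolding measure_pmf_bind
  by (subst measure_pmf.measure_bind[where N="count_space UNIV"])
     (auto simp: measurable_measure_pmf intro: measure_pmf_in_subprob_algebra)

lemma bind_bounds:
  assumes "\<And>x. x \<in> set_pmf M \<Longrightarrow> lo \<le> measure_pmf.prob (f x) X \<and> measure_pmf.prob (f x) X \<le> hi"
  shows "lo \<le> measure_pmf.prob (bind_pmf M f) X \<and> measure_pmf.prob (bind_pmf M f) X \<le> hi"
proof -
  have int: "integrable M (\<lambda>x. measure_pmf.prob (f x) X)"
    by (rule measure_pmf.integrable_const_bound[where B=1]) auto
  have "(\<integral>x. lo \<partial>M) \<le> (\<integral>x. measure_pmf.prob (f x) X \<partial>M)"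
    by (rule integral_mono_AE) (use int assms in \<open>auto simp: AE_measure_pmf_iff\<close>)
  moreover have "(\<integral>x. measure_pmf.prob (f x) X \<partial>M) \<le> (\<integral>x. hi \<partial>M)"
    by (rule integral_mono_AE) (use int assms in \<open>auto simp: AE_measure_pmf_iff\<close>)
  ultimately show ?thesis by (simp add: meas_bind)
qed

lemma pm_mult: "(a = 1 \<or> a = -1) \<Longrightarrow> (b = 1 \<or> b = -1) \<Longrightarrow> a * b = (if a = b then 1 else (-1::real))"
  by auto

lemma ip_phi:
  assumes U: "\<forall>j<d. U j = 1 \<or> U j = -1" and v: "v \<in> sign_cube d"
  shows "ip d v U = 2 * real (card {j\<in>{..<d}. v j = U j}) - real d"
proof -
  let ?A = "{j\<in>{..<d}. v j = U j}"
  have "ip d v U = (\<Sum>j<d. if v j = U j then 1 else (-1::real))"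
    unfolding ip_def using U v by (intro sum.cong refl) (auto simp: sign_cube_def pm_mult)
  also have "\<dots> = real (card ?A) - real (card ({..<d} - ?A))"
    by (subst sum.If_cases) (auto simp: Int_def set_diff_eq intro!: arg_cong[where f=card])
  also have "card ({..<d} - ?A) = d - card ?A"
    by (subst card_Diff_subset) auto
  also have "card ?A \<le> d" using card_mono[of "{..<d}" ?A] by auto
  ultimately show ?thesis by (simp add: of_nat_diff)
qed

lemma card_cube_pred:
  assumes U: "\<forall>j<d. U j = 1 \<or> U j = -1"
  shows "card {v \<in> sign_cube d. P (ip d v U)} = card {A. A \<subseteq> {..<d} \<and> P (2 * real (card A) - real d)}"
proof (rule bij_betw_same_card)
  let ?phi = "\<lambda>v. {j\<in>{..<d}. v j = U j}"
  show "bij_betw ?phi {v \<in> sign_cube d. P (ip d v U)} {A. A \<subseteq> {..<d} \<and> P (2 * real (card A) - real d)}"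
  proof (rule bij_betw_imageI)
    show "inj_on ?phi {v \<in> sign_cube d. P (ip d v U)}"
    proof (rule inj_onI)
      fix v w assume v: "v \<in> {v \<in> sign_cube d. P (ip d v U)}" and w: "w \<in> {v \<in> sign_cube d. P (ip d v U)}"
        and eq: "?phi v = ?phi w"
      show "v = w"
      proof
        fix j
        show "v j = w j"
        proof (cases "j < d")
          case True
          have "(v j = U j) = (w j = U j)" using eq True by blast
          then show ?thesis using U v w True by (auto simp: sign_cube_def) (smt (verit))
        next
          case False then show ?thesis using v w by (auto simp: sign_cube_def)
        qed
      qed
    qed
    show "?phi ` {v \<in> sign_cube d. P (ip d v U)} = {A. A \<subseteq> {..<d} \<and> P (2 * real (card A) - real d)}"
    proof
      show "?phi ` {v \<in> sign_cube d. P (ip d v U)} \<subseteq> {A. A \<subseteq> {..<d} \<and> P (2 * real (card A) - real d)}"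
        using ip_phi[OF U] by auto
      show "{A. A \<subseteq> {..<d} \<and> P (2 * real (card A) - real d)} \<subseteq> ?phi ` {v \<in> sign_cube d. P (ip d v U)}"
      proof
        fix A assume A: "A \<in> {A. A \<subseteq> {..<d} \<and> P (2 * real (card A) - real d)}"
        define v where "v = (\<lambda>j. if j < d then (if j \<in> A then U j else - U j) else 0)"
        have vc: "v \<in> sign_cube d" using U by (auto simp: v_def sign_cube_def)
        have pv: "?phi v = A" using A U by (auto simp: v_def)
        have "P (ip d v U)" using A ip_phi[OF U vc] pv by simp
        then show "A \<in> ?phi ` {v \<in> sign_cube d. P (ip d v U)}" using vc pv by force
      qed
    qed
  qed
qed

lemma card_subsets_pred:
  "card {A. A \<subseteq> {..<d} \<and> Q (card A)} = (\<Sum>l\<in>{l. l \<le> d \<and> Q l}. d choose l)"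
proof -
  have "{A. A \<subseteq> {..<d} \<and> Q (card A)} = (\<Union>l\<in>{l. l \<le> d \<and> Q l}. {A. A \<subseteq> {..<d} \<and> card A = l})"
    using card_mono[of "{..<d}"] by fastforce
  also have "card \<dots> = (\<Sum>l\<in>{l. l \<le> d \<and> Q l}. card {A. A \<subseteq> {..<d} \<and> card A = l})"
    by (rule card_UN_disjoint) (auto intro: finite_subset[of _ "Pow {..<d}"])
  also have "\<dots> = (\<Sum>l\<in>{l. l \<le> d \<and> Q l}. d choose l)"
    by (intro sum.cong refl) (simp add: n_subsets)
  finally show ?thesis .
qed

lemma dtau_iff:
  fixes a d \<kappa> :: nat
  shows "(2 * real a - real d > real \<kappa>) \<longleftrightarrow> dtau d \<kappa> \<le> a"
proof -
  have "dtau d \<kappa> \<le> a \<longleftrightarrow> \<lceil>(real d + real \<kappa> + 1) / 2\<rceil> \<le> int a"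
    unfolding dtau_def by (simp add: nat_le_iff)
  also have "\<dots> \<longleftrightarrow> (real d + real \<kappa> + 1) / 2 \<le> real a"
    by (simp add: ceiling_le_iff)
  also have "\<dots> \<longleftrightarrow> real (d + \<kappa> + 1) \<le> real (2 * a)" by (simp add: algebra_simps)
  also have "\<dots> \<longleftrightarrow> d + \<kappa> + 1 \<le> 2 * a" by (rule of_nat_le_iff)
  also have "\<dots> \<longleftrightarrow> real (d + \<kappa>) < real (2 * a)" by linarith
  also have "\<dots> \<longleftrightarrow> (2 * real a - real d > real \<kappa>)" by (simp, linarith)
  finally show ?thesis by simp
qed

lemma counts:
  assumes U: "\<forall>j<d. U j = 1 \<or> U j = -1" and dk: "\<kappa> \<le> d - 1" and d: "d \<ge> 1"
  shows "card {v \<in> sign_cube d. ip d v U > real \<kappa>} = (\<Sum>l = dtau d \<kappa>..d. d choose l)"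
    and "card {v \<in> sign_cube d. ip d v U \<le> real \<kappa>} = (\<Sum>l = 0..dtau d \<kappa> - 1. d choose l)"
proof -
  have pos: "dtau d \<kappa> \<ge> 1" using dtau_iff[where a=0 and d=d and \<kappa>=\<kappa>] by simp
  have le: "dtau d \<kappa> \<le> d" using dtau_iff[where a=d and d=d and \<kappa>=\<kappa>] dk d by (simp, linarith)
  have "card {v \<in> sign_cube d. ip d v U > real \<kappa>} = card {A. A \<subseteq> {..<d} \<and> dtau d \<kappa> \<le> card A}"
    using card_cube_pred[OF U, of "\<lambda>x. x > real \<kappa>"] dtau_iff by simp
  also have "\<dots> = (\<Sum>l\<in>{l. l \<le> d \<and> dtau d \<kappa> \<le> l}. d choose l)"
    by (rule card_subsets_pred)
  also have "{l. l \<le> d \<and> dtau d \<kappa> \<le> l} = {dtau d \<kappa>..d}" by auto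
  finally show "card {v \<in> sign_cube d. ip d v U > real \<kappa>} = (\<Sum>l = dtau d \<kappa>..d. d choose l)" .
  have "card {v \<in> sign_cube d. ip d v U \<le> real \<kappa>} = card {A. A \<subseteq> {..<d} \<and> \<not> dtau d \<kappa> \<le> card A}"
    using card_cube_pred[OF U, of "\<lambda>x. x \<le> real \<kappa>"] dtau_iff by (simp add: not_less[symmetric])
  also have "\<dots> = (\<Sum>l\<in>{l. l \<le> d \<and> \<not> dtau d \<kappa> \<le> l}. d choose l)"
    by (rule card_subsets_pred)
  also have "{l. l \<le> d \<and> \<not> dtau d \<kappa> \<le> l} = {0..dtau d \<kappa> - 1}" using pos le by auto
  finally show "card {v \<in> sign_cube d. ip d v U \<le> real \<kappa>} = (\<Sum>l = 0..dtau d \<kappa> - 1. d choose l)" .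
qed

lemma N1_le_N0:
  assumes dk: "\<kappa> \<le> d - 1" and d: "d \<ge> 1"
  shows "(\<Sum>l = dtau d \<kappa>..d. d choose l) \<le> (\<Sum>l = 0..dtau d \<kappa> - 1. d choose l)"
proof -
  have le: "dtau d \<kappa> \<le> d" using dtau_iff[where a=d and d=d and \<kappa>=\<kappa>] dk d by (simp, linarith)
  have two: "d < 2 * dtau d \<kappa>" using dtau_iff[where a="dtau d \<kappa>" and d=d and \<kappa>=\<kappa>] of_nat_0_le_iff[of \<kappa>]
    by (simp only: of_nat_less_iff[symmetric, where 'a=real]) auto
  have "(\<Sum>l = dtau d \<kappa>..d. d choose l) = (\<Sum>l = 0..d - dtau d \<kappa>. d choose l)"
    by (rule sum.reindex_bij_witness[where i="\<lambda>l. d - l" and j="\<lambda>l. d - l"])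
       (use le in \<open>auto, metis binomial_symmetric\<close>)
  also have "\<dots> \<le> (\<Sum>l = 0..dtau d \<kappa> - 1. d choose l)"
    by (rule sum_mono2) (use two in auto)
  finally show ?thesis .
qed

theorem theorem4p5:
  fixes d \<kappa> :: nat and \<epsilon>0 \<epsilon> p0 :: real
  assumes "d \<ge> 1" and "\<kappa> \<le> d - 1" and "\<epsilon>0 \<ge> 0" and "\<epsilon> \<ge> 0"
    and "p0 = exp \<epsilon>0 / (1 + exp \<epsilon>0)"
    and "ln (real (\<Sum>l = 0..dtau d \<kappa> - 1. d choose l))
         - ln (real (\<Sum>l = dtau d \<kappa>..d. d choose l)) \<le> \<epsilon>"
  shows "local_dp (input_cube d) (\<lambda>u. PrivUnitInfty d u \<kappa> p0) (\<epsilon> + \<epsilon>0)"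
proof -
  note d = assms(1) and dk = assms(2) and p0 = assms(5) and hyp = assms(6)
  define N1 where "N1 = (\<Sum>l = dtau d \<kappa>..d. d choose l)"
  define N0 where "N0 = (\<Sum>l = 0..dtau d \<kappa> - 1. d choose l)"
  define hi where "hi = p0 / real N1"
  define lo where "lo = (1 - p0) / real N0"
  define C where "C = sign_cube d"
  define Q where "Q = (\<lambda>U. bind_pmf (bernoulli_pmf p0) (\<lambda>b. if b then pmf_of_set {v \<in> sign_cube d. ip d v U > real \<kappa>}
          else pmf_of_set {v \<in> sign_cube d. ip d v U \<le> real \<kappa>}))"
  have e0: "exp \<epsilon>0 \<ge> 1" using assms(3) by simp
  have ep: "0 < 1 + exp \<epsilon>0" using e0 by linarith
  have p1: "0 \<le> p0" "p0 \<le> 1" unfolding p0 using ep by auto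
  have p2: "1 - p0 \<le> p0" unfolding p0 using e0 ep by (simp add: field_simps)
  have p3: "p0 = exp \<epsilon>0 * (1 - p0)" using p0 ep by (auto simp: field_simps)
  have NN: "N1 \<le> N0" unfolding N1_def N0_def by (rule N1_le_N0[OF dk d])
  have cnt: "card {v \<in> sign_cube d. ip d v U > real \<kappa>} = N1" "card {v \<in> sign_cube d. ip d v U \<le> real \<kappa>} = N0"
    if U: "\<forall>j<d. U j = 1 \<or> U j = -1" for U
    using counts[OF U dk d] unfolding N1_def N0_def by auto
  have N1pos: "N1 > 0" unfolding N1_def
    using dtau_iff[where a=d and d=d and \<kappa>=\<kappa>] dk d
    by (intro sum_pos2[where i=d]) auto
  have N0pos: "N0 > 0" using NN N1pos by linarith
  have Cfin: "finite C"
  proof -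
    define U1 where "U1 = (\<lambda>j::nat. 1::real)"
    have U1: "\<forall>j<d. U1 j = 1 \<or> U1 j = -1" by (simp add: U1_def)
    have "finite {v \<in> sign_cube d. ip d v U1 > real \<kappa>}" "finite {v \<in> sign_cube d. ip d v U1 \<le> real \<kappa>}"
      using cnt[OF U1] N1pos N0pos by (auto intro: card_ge_0_finite)
    then have "finite ({v \<in> sign_cube d. ip d v U1 > real \<kappa>} \<union> {v \<in> sign_cube d. ip d v U1 \<le> real \<kappa>})" by simp
    moreover have "{v \<in> sign_cube d. ip d v U1 > real \<kappa>} \<union> {v \<in> sign_cube d. ip d v U1 \<le> real \<kappa>} = C"
      unfolding C_def by auto
    ultimately show ?thesis by simp
  qed
  have Qb: "lo * real (card (C \<inter> T)) \<le> measure_pmf.prob (Q U) T \<and> measure_pmf.prob (Q U) T \<le> hi * real (card (C \<inter> T))"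
    if U: "\<forall>j<d. U j = 1 \<or> U j = -1" for U T
  proof -
    define A where "A = {v \<in> sign_cube d. ip d v U > real \<kappa>}"
    define B where "B = {v \<in> sign_cube d. ip d v U \<le> real \<kappa>}"
    have cA: "card A = N1" and cB: "card B = N0" using cnt[OF U] by (auto simp: A_def B_def)
    have fA: "finite A" "A \<noteq> {}" using cA N1pos by (auto intro: card_ge_0_finite)
    have fB: "finite B" "B \<noteq> {}" using cB N0pos by (auto intro: card_ge_0_finite)
    have "measure_pmf.prob (Q U) T = p0 * (real (card (A \<inter> T)) / real N1) + (1 - p0) * (real (card (B \<inter> T)) / real N0)"
      unfolding Q_def meas_bind using p1 fA fB cA cB
      by (simp add: A_def[symmetric] B_def[symmetric] measure_pmf_of_set mult.commute)
    also have "\<dots> = hi * real (card (A \<inter> T)) + lo * real (card (B \<inter> T))"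
      by (simp add: hi_def lo_def)
    finally have pr: "measure_pmf.prob (Q U) T = hi * real (card (A \<inter> T)) + lo * real (card (B \<inter> T))" .
    have "C \<inter> T = (A \<inter> T) \<union> (B \<inter> T)" by (auto simp: A_def B_def C_def)
    moreover have "(A \<inter> T) \<inter> (B \<inter> T) = {}" by (auto simp: A_def B_def)
    ultimately have cc: "card (C \<inter> T) = card (A \<inter> T) + card (B \<inter> T)"
      using fA fB by (simp add: card_Un_disjoint)
    have lohi: "lo \<le> hi" unfolding lo_def hi_def
      using p1 p2 NN N1pos by (intro frac_le) auto
    have "lo \<ge> 0" using p1 unfolding lo_def by simp
    then show ?thesis using pr cc lohi
      by (auto simp: algebra_simps intro!: add_mono mult_right_mono)
  qed
  have Mb: "lo * real (card (C \<inter> T)) \<le> measure_pmf.prob (PrivUnitInfty d u \<kappa> p0) S \<and>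
            measure_pmf.prob (PrivUnitInfty d u \<kappa> p0) S \<le> hi * real (card (C \<inter> T))"
    if T: "T = (\<lambda>v j. v j / priv_m d \<kappa> p0) -` S" for u S T
  proof -
    have "measure_pmf.prob (PrivUnitInfty d u \<kappa> p0) S = measure_pmf.prob (bind_pmf (round_pmf d u) Q) T"
      unfolding PrivUnitInfty_def T Q_def by simp
    moreover have "lo * real (card (C \<inter> T)) \<le> measure_pmf.prob (bind_pmf (round_pmf d u) Q) T \<and>
            measure_pmf.prob (bind_pmf (round_pmf d u) Q) T \<le> hi * real (card (C \<inter> T))"
    proof (rule bind_bounds)
      fix U assume "U \<in> set_pmf (round_pmf d u)"
      then have "U \<in> PiE_dflt {..<d} 0 (set_pmf \<circ> (\<lambda>j. map_pmf (\<lambda>b. if b then 1 else -1) (bernoulli_pmf ((1 + u j) / 2))))"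
        unfolding round_pmf_def by (rule subsetD[OF set_Pi_pmf_subset'[OF finite_lessThan]])
      then have "\<forall>j<d. U j = 1 \<or> U j = -1" by (auto simp: PiE_dflt_def)
      then show "lo * real (card (C \<inter> T)) \<le> measure_pmf.prob (Q U) T \<and> measure_pmf.prob (Q U) T \<le> hi * real (card (C \<inter> T))"
        by (rule Qb)
    qed
    ultimately show ?thesis by simp
  qed
  have ratio: "hi \<le> exp (\<epsilon> + \<epsilon>0) * lo"
  proof -
    have "ln (real N0 / real N1) \<le> \<epsilon>" using hyp assms(4) N0pos N1pos unfolding N0_def N1_def by (simp add: ln_div)
    then have "real N0 / real N1 \<le> exp \<epsilon>" using N0pos N1pos by (metis exp_le_cancel_iff exp_ln divide_pos_pos of_nat_0_less_iff) 
    then have "real N0 \<le> exp \<epsilon> * real N1" using N1pos by (simp add: field_simps)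
    then have "exp \<epsilon>0 * (1 - p0) * real N0 \<le> exp \<epsilon>0 * (1 - p0) * (exp \<epsilon> * real N1)"
      using p1 by (intro mult_left_mono) auto
    moreover have "p0 * real N0 = exp \<epsilon>0 * (1 - p0) * real N0" using p3 by simp
    moreover have "exp \<epsilon>0 * (1 - p0) * (exp \<epsilon> * real N1) = exp (\<epsilon> + \<epsilon>0) * (1 - p0) * real N1"
      by (simp add: exp_add)
    ultimately have "p0 * real N0 \<le> exp (\<epsilon> + \<epsilon>0) * (1 - p0) * real N1" by (metis (no_types))
    then show ?thesis unfolding hi_def lo_def using N0pos N1pos by (simp add: field_simps)
  qed
  show ?thesis
    unfolding local_dp_def
  proof (intro ballI allI)
    fix u u' and S :: "(nat \<Rightarrow> real) set"
    define T where "T = (\<lambda>v j. v j / priv_m d \<kappa> p0) -` S"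
    have c0: "0 \<le> real (card (C \<inter> T))" by simp
    have "measure_pmf.prob (PrivUnitInfty d u \<kappa> p0) S \<le> hi * real (card (C \<inter> T))"
      using Mb[OF T_def] by blast
    also have "\<dots> \<le> exp (\<epsilon> + \<epsilon>0) * lo * real (card (C \<inter> T))"
      using ratio c0 by (intro mult_right_mono) auto
    also have "\<dots> \<le> exp (\<epsilon> + \<epsilon>0) * measure_pmf.prob (PrivUnitInfty d u' \<kappa> p0) S"
      using Mb[OF T_def, of u'] by (simp add: mult.assoc)
    finally show "measure_pmf.prob (PrivUnitInfty d u \<kappa> p0) S \<le> exp (\<epsilon> + \<epsilon>0) * measure_pmf.prob (PrivUnitInfty d u' \<kappa> p0) S" .
  qed
qed

end
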